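(* If $(a,b)\in R_0$, then $J(a,b)\ge 1/5$.
   Context: For $(a,b)\in\mathbb R^2$ define $f_{a,b}(x_1,x_2)=[b+a(x_1+x_2)+x_1x_2](2-x_1-x_2)$. Let $X_1=\{(x_1,x_2):-1\le x_1\le 0,\ -x_1\le x_2\le 1\}$ and $X_2=\{(x_1,x_2):-1\le x_1\le0,\ x_1\le x_2\le -x_1\}$. Let $\chi_{a,b}=\max_{X_1\cup X_2}f_{a,b}$, $m_{a,b}=\min_{X_1\cup X_2}f_{a,b}$, $R=\{(a,b)\in\mathbb R^2: m_{a,b}>0\}$, and for $(a,b)\in R$ let $J(a,b)=\frac{\chi_{a,b}-m_{a,b}}{\chi_{a,b}+m_{a,b}}$. Let $R_0=\{(a,b)\in R: b\le 2a\}$. *)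

theory Defs
  imports "HOL-Analysis.Analysis"
begin

definition f_ab :: "real \<Rightarrow> real \<Rightarrow> real \<times> real \<Rightarrow> real" where
  "f_ab a b p = (b + a * (fst p + snd p) + fst p * snd p) * (2 - fst p - snd p)"

definition X1 :: "(real \<times> real) set" where
  "X1 = {(x1, x2). -1 \<le> x1 \<and> x1 \<le> 0 \<and> -x1 \<le> x2 \<and> x2 \<le> 1}"

definition X2 :: "(real \<times> real) set" where
  "X2 = {(x1, x2). -1 \<le> x1 \<and> x1 \<le> 0 \<and> x1 \<le> x2 \<and> x2 \<le> -x1}"

text \<open>Maximum and minimum of f over the compact set X1 union X2 (attained, so Sup/Inf = max/min).\<close>
definition chi :: "real \<Rightarrow> real \<Rightarrow> real" where
  "chi a b = (SUP p\<in>X1 \<union> X2. f_ab a b p)"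

definition m_ab :: "real \<Rightarrow> real \<Rightarrow> real" where
  "m_ab a b = (INF p\<in>X1 \<union> X2. f_ab a b p)"

definition R :: "(real \<times> real) set" where
  "R = {(a, b). m_ab a b > 0}"

definition J :: "real \<Rightarrow> real \<Rightarrow> real" where
  "J a b = (chi a b - m_ab a b) / (chi a b + m_ab a b)"

definition R0 :: "(real \<times> real) set" where
  "R0 = {(a, b). (a, b) \<in> R \<and> b \<le> 2 * a}"

end

theory Submission
  imports Defs
begin

lemma D_bound:
  assumes "p \<in> X1 \<union> X2"
  shows "\<bar>f_ab a b p\<bar> \<le> (\<bar>b\<bar> + 2 * \<bar>a\<bar> + 1) * 4"
proof -
  obtain x y where p: "p = (x, y)" by (cases p)
  have xy: "\<bar>x\<bar> \<le> 1" "\<bar>y\<bar> \<le> 1" using assms unfolding p X1_def X2_def by auto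
  have h1: "\<bar>b + a * (x + y) + x * y\<bar> \<le> \<bar>b\<bar> + 2 * \<bar>a\<bar> + 1"
  proof -
    have "\<bar>a * (x + y)\<bar> \<le> \<bar>a\<bar> * 2"
      unfolding abs_mult by (rule mult_left_mono) (use xy in auto)
    moreover have "\<bar>x * y\<bar> \<le> 1"
      unfolding abs_mult using xy by (simp add: mult_le_one)
    ultimately show ?thesis by (smt (verit))
  qed
  have h2: "\<bar>2 - x - y\<bar> \<le> 4" using xy by auto
  have "\<bar>f_ab a b p\<bar> = \<bar>b + a * (x + y) + x * y\<bar> * \<bar>2 - x - y\<bar>"
    unfolding p f_ab_def by (simp add: abs_mult)
  also have "\<dots> \<le> (\<bar>b\<bar> + 2 * \<bar>a\<bar> + 1) * 4"
    by (rule mult_mono) (use h1 h2 in auto)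
  finally show ?thesis .
qed

theorem propositionA2:
  fixes a b :: real
  assumes "(a, b) \<in> R0"
  shows "J a b \<ge> 1 / 5"
proof -
  let ?D = "X1 \<union> X2"
  have m: "m_ab a b > 0" and ba: "b \<le> 2 * a" using assms unfolding R0_def R_def by auto
  have ba: "bdd_above (f_ab a b ` ?D)"
    unfolding bdd_above_def using D_bound[of _ a b] by (intro exI[of _ "(\<bar>b\<bar> + 2 * \<bar>a\<bar> + 1) * 4"]) (auto simp: abs_le_iff)
  have bb: "bdd_below (f_ab a b ` ?D)"
  proof -
    have "\<forall>p\<in>?D. - ((\<bar>b\<bar> + 2 * \<bar>a\<bar> + 1) * 4) \<le> f_ab a b p"
      using D_bound[of _ a b] by (metis abs_le_iff minus_le_iff)
    then show ?thesis unfolding bdd_below_def by blast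
  qed
  have P0: "(0, 0) \<in> ?D" and P1: "(-1, 1) \<in> ?D" and P2: "(-1, -1) \<in> ?D"
    unfolding X1_def X2_def by auto
  have c0: "chi a b \<ge> 2 * b"
    using cSUP_upper[OF P0 ba] unfolding chi_def by (simp add: f_ab_def)
  have m1: "m_ab a b \<le> 2 * (b - 1)"
    using cINF_lower[OF bb P1] unfolding m_ab_def by (simp add: f_ab_def)
  have m2: "m_ab a b \<le> 4 * (b - 2 * a + 1)"
    using cINF_lower[OF bb P2] unfolding m_ab_def by (simp add: f_ab_def)
  have key: "2 * chi a b \<ge> 3 * m_ab a b"
  proof (cases "b \<le> 3")
    case True then show ?thesis using c0 m1 by (smt (verit))
  next
    case False then show ?thesis using c0 m2 assms unfolding R0_def by (smt (verit) case_prodD mem_Collect_eq)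
  qed
  have pos: "chi a b + m_ab a b > 0" using m key by linarith
  show ?thesis unfolding J_def using key pos by (simp add: field_simps)
qed

end
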